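(* Let $k\ge 0$. (1) There exists a unique $\alpha\in(0,1)$ with $P_k(\alpha)=0$; equivalently, there exists a unique $\alpha'>1$ with $P_k(\alpha')=0$, namely $\alpha'=1/\alpha$. (2) If $\beta\in\mathbb{C}$ is a root of $P_k$, then $\beta=\alpha$, $\beta=\alpha'$, or $|\beta|=1$.
   Context: For $k\ge 0$, $P_{k}(q)=1+\sum_{l=1}^{k+1} q^{4l-4}(q^4-q^3-q^2-q)$, i.e. $P_0=q^4-q^3-q^2-q+1$, $P_1=q^8-q^7-q^6-q^5+q^4-q^3-q^2-q+1$, $P_k=(q^4+1)P_{k-1}-q^4P_{k-2}$. One has $P_k(q)=q^{2k+2}\,q_k(q+q^{-1}+2)$, where $q_0(x)=x^2-5x+3$, $q_1(x)=(x^3-8x^2+17x-5)(x-1)$, $q_k=(x^2-4x+2)q_{k-1}-q_{k-2}$; all roots of $q_k$ are real (it is, up to a factor, the characteristic polynomial of a real symmetric matrix). *)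

theory Defs
  imports Complex_Main
begin

definition P :: "nat \<Rightarrow> 'a::comm_ring_1 \<Rightarrow> 'a" where
  "P k q = 1 + (\<Sum>l = 1..k+1. q ^ (4*l - 4) * (q^4 - q^3 - q^2 - q))"

end

theory Submission
  imports Defs "HOL-Computational_Algebra.Polynomial"
begin

lemma P_Suc: "P (Suc k) q = P k q + q^(4*k+4) * (q^4 - q^3 - q^2 - q)"
  unfolding P_def by (simp add: algebra_simps)

lemma P_0: "P 0 q = q^4 - q^3 - q^2 - q + 1"
  unfolding P_def by simp

lemma P_ident: "(q^4 - 1) * P k q = q^(4*k+4) * (q^4 - q^3 - q^2 - q) + (q^3 + q^2 + q - 1)"
proof (induction k)
  case 0 show ?case by (simp add: P_0 algebra_simps power_add[symmetric] eval_nat_numeral)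
next
  case (Suc k)
  have "(q^4 - 1) * P (Suc k) q = (q^4 - 1) * P k q + (q^4-1)* q^(4*k+4) * (q^4 - q^3 - q^2 - q)"
    by (simp add: P_Suc algebra_simps)
  also have "\<dots> = q^(4*Suc k+4) * (q^4 - q^3 - q^2 - q) + (q^3 + q^2 + q - 1)"
    using Suc by (simp add: algebra_simps power_add)
  finally show ?case .
qed

lemma P_palin: fixes z :: "'a::field" assumes "z \<noteq> 0"
  shows "z^(4*k+4) * P k (1/z) = P k z"
proof (induction k)
  case 0 show ?case using assms by (simp add: P_0 field_simps eval_nat_numeral)
next
  case (Suc k)
  have e1: "z^(4*Suc k+4) = z^4 * z^(4*k+4)" by (simp add: power_add[symmetric])
  have e2: "z^(4*k+4) * (1/z)^(4*k+4) = 1" using assms by (simp add: power_mult_distrib[symmetric])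
  have e3: "z^4 * ((1/z)^4 - (1/z)^3 - (1/z)^2 - 1/z) = 1 - z - z^2 - z^3"
    using assms by (simp add: field_simps eval_nat_numeral)
  have "z^(4*Suc k+4) * P (Suc k) (1/z) = z^4 * (z^(4*k+4) * P k (1/z)) + z^4 * ((z^(4*k+4) * (1/z)^(4*k+4)) * ((1/z)^4 - (1/z)^3 - (1/z)^2 - 1/z))"
    unfolding e1 P_Suc by (simp add: algebra_simps)
  also have "\<dots> = z^4 * (z^(4*k+4) * P k (1/z)) + (1 - z - z^2 - z^3)"
    unfolding e2 mult_1_left e3 by (rule refl)
  also have "\<dots> = P (Suc k) z"
    using Suc P_ident[of z k] by (simp add: P_Suc algebra_simps)
  finally show ?case .
qed

fun pp :: "nat \<Rightarrow> 'a::comm_ring_1 poly" where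
  "pp 0 = [:1,-1,-1,-1,1:]"
| "pp (Suc k) = pp k + monom 1 (4*k+4) * [:0,-1,-1,-1,1:]"

lemma poly_pp: "poly (pp k) q = P k q"
  by (induction k) (simp_all add: P_0 P_Suc poly_monom algebra_simps eval_nat_numeral)

lemma pp_deg: "degree (pp k :: 'a::comm_ring_1 poly) \<le> 4*k+4 \<and> coeff (pp k :: 'a poly) (4*k+4) = 1"
proof (induction k)
  case 0 show ?case by (simp add: numeral_eq_Suc)
next
  case (Suc k)
  have d: "degree (monom (1::'a) (4*k+4) * [:0,-1,-1,-1,1:]) \<le> 4*k+8"
    by (rule order.trans[OF degree_mult_le]) (use degree_monom_le[of "1::'a" "4*k+4"] in simp)
  have "degree (pp (Suc k) :: 'a poly) \<le> 4 * Suc k + 4"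
    unfolding pp.simps(2) using Suc d by (intro order.trans[OF degree_add_le]) auto
  moreover have "coeff (pp (Suc k) :: 'a poly) (4 * Suc k + 4) = 1"
    using Suc by (simp add: coeff_monom_mult coeff_eq_0 numeral_eq_Suc)
  ultimately show ?case by blast
qed

lemma card_roots: "finite {z::complex. P k z = 0} \<and> card {z::complex. P k z = 0} \<le> 4*k+4"
proof -
  have ne: "pp k \<noteq> (0::complex poly)" using pp_deg[of k] by (metis coeff_0 zero_neq_one)
  have "card {z::complex. P k z = 0} \<le> degree (pp k :: complex poly)"
    using card_poly_roots_bound[OF ne] by (simp add: poly_pp)
  moreover have "degree (pp k::complex poly) \<le> 4*k+4" using pp_deg by blast
  moreover have "finite {z::complex. P k z = 0}" using poly_roots_finite[OF ne] by (simp add: poly_pp)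
  ultimately show ?thesis by linarith
qed
definition g :: "nat \<Rightarrow> real \<Rightarrow> real" where
  "g k t = sin ((2*real k+4)*t) - sin ((2*real k+3)*t) - sin ((2*real k+2)*t) - sin ((2*real k+1)*t)"

lemma two_i_sin: "2 * \<i> * complex_of_real (sin a) = cis a - cis (-a)"
  by (simp add: complex_eq_iff)

lemma cis_pow: "cis t ^ n = cis (real n * t)" by (rule DeMoivre)

lemma cis_mult': "a + b = c \<Longrightarrow> cis a * cis b = cis c" by (simp add: cis_mult)

lemma key: "P k (cis t) * complex_of_real (sin (2*t)) = cis ((2*real k+2)*t) * complex_of_real (g k t)"
proof -
  let ?z = "cis t"
  have A: "(?z^4 - 1) * P k ?z = ?z^(4*k+4) * (?z^4 - ?z^3 - ?z^2 - ?z) + (?z^3 + ?z^2 + ?z - 1)"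
    by (rule P_ident)
  have L: "?z^4 - 1 = cis (2*t) * (2*\<i>*sin(2*t))"
    unfolding two_i_sin cis_pow by (simp add: right_diff_distrib cis_mult)
  have R: "?z^(4*k+4) * (?z^4 - ?z^3 - ?z^2 - ?z) + (?z^3 + ?z^2 + ?z - 1)
     = cis ((2*real k+4)*t) * (2*\<i>*g k t)"
  proof -
    have E: "2*\<i>*complex_of_real (g k t) = (cis ((2*real k+4)*t) - cis (-((2*real k+4)*t)))
       - (cis ((2*real k+3)*t) - cis (-((2*real k+3)*t)))
       - (cis ((2*real k+2)*t) - cis (-((2*real k+2)*t)))
       - (cis ((2*real k+1)*t) - cis (-((2*real k+1)*t)))"
      unfolding g_def two_i_sin[symmetric] by (simp add: algebra_simps)
    show ?thesis
      unfolding cis_pow E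
      apply (simp add: ring_distribs cis_mult)
      apply (simp add: algebra_simps)
      done
  qed
  have "cis (2*t) * (2*\<i>) * (P k ?z * sin (2*t)) = cis (2*t) * (2*\<i>) * (cis ((2*real k+2)*t) * g k t)"
  proof -
    have "cis (2*t) * (2*\<i>) * (P k ?z * sin (2*t)) = (?z^4 - 1) * P k ?z" unfolding L by simp
    also have "\<dots> = cis ((2*real k+4)*t) * (2*\<i>*g k t)" using A R by simp
    also have "\<dots> = cis (2*t) * (2*\<i>) * (cis ((2*real k+2)*t) * g k t)"
      by (simp add: cis_mult algebra_simps)
    finally show ?thesis .
  qed
  moreover have "cis (2*t) * (2*\<i>) \<noteq> 0" by simp
  ultimately show ?thesis by simp
qed
lemma g_alt: "g k t = 2 * (cos ((4*real k+5)*t/2) * sin (3*t/2) - sin ((4*real k+5)*t/2) * cos (t/2))"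
proof -
  define a where "a = (4*real k+5)*t/2"
  define b where "b = t/2"
  have 1: "(2*real k+4)*t = a + 3*b" "(2*real k+3)*t = a + b" "(2*real k+2)*t = a - b"
    "(2*real k+1)*t = a - 3*b" "3*t/2 = 3*b" unfolding a_def b_def by (simp_all add: field_simps)
  show ?thesis unfolding g_def 1 a_def[symmetric] b_def[symmetric]
    by (simp add: sin_add sin_diff algebra_simps)
qed

lemma g_odd: "g k (-t) = - g k t" unfolding g_def by simp

definition th :: "nat \<Rightarrow> nat \<Rightarrow> real" where
  "th k j = (2*real j+1)*pi/(4*real k+5)"

lemma g_th: "g k (th k j) = -2 * (-1)^j * cos (th k j / 2)"
proof -
  have e: "(4*real k+5)*th k j/2 = real j * pi + pi/2" unfolding th_def by (simp add: field_simps)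
  show ?thesis unfolding g_alt e by (simp add: sin_add cos_add)
qed

lemma th_pos: "0 < th k j" unfolding th_def by simp

lemma th_mono: "i < j \<Longrightarrow> th k i < th k j"
  unfolding th_def by (simp add: divide_strict_right_mono)

lemma th_lt_pi: "j \<le> 2*k+1 \<Longrightarrow> th k j < pi"
proof -
  assume "j \<le> 2*k+1"
  then have "2*real j+1 < 4*real k+5" by linarith
  then have "(2*real j+1)*pi < (4*real k+5)*pi" by simp
  then show ?thesis unfolding th_def by (simp add: pos_divide_less_eq)
qed

lemma g_th_sign: "j \<le> 2*k+1 \<Longrightarrow> (-1)^j * g k (th k j) < 0"
proof -
  assume j: "j \<le> 2*k+1"
  have "0 < cos (th k j / 2)" using th_pos[of k j] th_lt_pi[OF j] by (intro cos_gt_zero) auto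
  then show ?thesis unfolding g_th by (simp add: mult.assoc[symmetric] power_mult_distrib[symmetric])
qed

definition thl :: "nat \<Rightarrow> real" where "thl k = (4*real k+4)*pi/(4*real k+5)"

lemma g_thl: "g k (thl k) < 0"
proof -
  have e: "(4*real k+5)*thl k/2 = real (2*k+2) * pi" unfolding thl_def by (simp add: field_simps)
  have "sin (3*thl k/2) < 0"
    by (rule sin_lt_zero) (simp_all add: thl_def field_simps add_pos_nonneg)
  moreover have c: "cos (real (2*k+2) * pi) = 1" by (simp only: cos_npi) simp
  moreover have si: "sin (real (2*k+2) * pi) = 0" by (simp only: sin_npi)
  ultimately show ?thesis unfolding g_alt e c si by simp
qed

lemma cont_g: "continuous_on S (g k)" unfolding g_def by (intro continuous_intros)

lemma ivt_root: "a < b \<Longrightarrow> g k a * g k b < 0 \<Longrightarrow> \<exists>r. a < r \<and> r < b \<and> g k r = 0"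
proof -
  assume ab: "a < b" and s: "g k a * g k b < 0"
  have "\<exists>r. a \<le> r \<and> r \<le> b \<and> g k r = 0"
  proof (cases "g k a < 0")
    case True then have "g k b > 0" using s by (simp add: mult_less_0_iff)
    then show ?thesis using True ab by (intro IVT' cont_g) auto
  next
    case False then have "g k a > 0" "g k b < 0" using s by (auto simp add: mult_less_0_iff)
    then show ?thesis using ab by (intro IVT2' cont_g) auto
  qed
  then obtain r where "a \<le> r" "r \<le> b" "g k r = 0" by blast
  moreover have "r \<noteq> a" "r \<noteq> b" using s \<open>g k r = 0\<close> by auto
  ultimately show ?thesis by (intro exI[of _ r]) auto
qed
definition hi :: "nat \<Rightarrow> nat \<Rightarrow> real" where
  "hi k j = (if j = 2*k+1 then thl k else th k (j+1))"

lemma th_thl: "th k (2*k+1) < thl k"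
  unfolding th_def thl_def by (simp add: divide_strict_right_mono)

lemma thl_lt_pi: "thl k < pi"
  unfolding thl_def by (simp add: pos_divide_less_eq)

lemma th_k: "th k k < pi/2"
proof -
  have "(2*real k+1)*pi*2 < pi*(4*real k+5)" by (simp add: algebra_simps)
  then show ?thesis unfolding th_def by (simp add: field_simps)
qed

lemma th_k1: "pi/2 < th k (Suc k)"
proof -
  have "pi*(4*real k+5) < (2*real (Suc k)+1)*pi*2" by (simp add: algebra_simps)
  then show ?thesis unfolding th_def by (simp add: field_simps)
qed

lemma root_exists:
  assumes "j \<le> 2*k+1" "j \<noteq> k"
  shows "\<exists>r. th k j < r \<and> r < hi k j \<and> g k r = 0"
proof (rule ivt_root)
  show "th k j < hi k j" unfolding hi_def using th_thl[of k] th_mono[of j "j+1" k] by auto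
  show "g k (th k j) * g k (hi k j) < 0"
  proof (cases "j = 2*k+1")
    case True
    have "(-1)^(2*k+1) * g k (th k (2*k+1)) < 0" by (rule g_th_sign) simp
    then have "g k (th k j) > 0" using True by simp
    then show ?thesis using True g_thl[of k] unfolding hi_def by (simp add: mult_pos_neg)
  next
    case False
    then have j1: "j+1 \<le> 2*k+1" using assms by simp
    have a: "(-1)^j * g k (th k j) < 0" using assms by (intro g_th_sign) auto
    have b: "(-1)^(j+1) * g k (th k (j+1)) < 0" using j1 by (intro g_th_sign)
    define sg :: real where "sg = (-1)^j"
    have sg2: "sg * sg = 1" unfolding sg_def by (simp add: power_add[symmetric] mult_2[symmetric])
    have a': "sg * g k (th k j) < 0" using a unfolding sg_def .
    have b': "sg * g k (th k (j+1)) > 0" using b unfolding sg_def by simp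
    have X: "(sg * g k (th k j)) * (sg * g k (th k (j+1))) < 0" using a' b' by (rule mult_neg_pos)
    have Y: "(sg * g k (th k j)) * (sg * g k (th k (j+1))) = (sg*sg) * (g k (th k j) * g k (th k (j+1)))"
      by (simp add: algebra_simps)
    have "(sg*sg) * (g k (th k j) * g k (th k (j+1))) < 0" using X unfolding Y .
    then show ?thesis using False unfolding hi_def sg2 by simp
  qed
qed

lemma root_props:
  assumes "j \<le> 2*k+1" "j \<noteq> k" "th k j < r" "r < hi k j"
  shows "0 < r \<and> r < pi \<and> sin (2*r) \<noteq> 0"
proof (cases "j < k")
  case True
  have "hi k j \<le> th k k" unfolding hi_def using True th_mono[of "j+1" k k] by (cases "j+1 = k") auto
  then have "r < pi/2" using th_k[of k] assms by linarith
  moreover have "0 < r" using th_pos[of k j] assms by linarith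
  ultimately show ?thesis using sin_gt_zero[of "2*r"] by auto
next
  case False
  then have jk: "Suc k \<le> j" using assms by auto
  have "th k (Suc k) \<le> th k j" using th_mono[of "Suc k" j k] jk by (cases "Suc k = j") auto
  then have "pi/2 < r" using th_k1[of k] assms by linarith
  moreover have "r < pi"
  proof (cases "j = 2*k+1")
    case True then show ?thesis using assms thl_lt_pi[of k] unfolding hi_def by simp
  next
    case False then show ?thesis using assms th_lt_pi[of "j+1" k] unfolding hi_def by simp
  qed
  ultimately show ?thesis using sin_lt_zero[of "2*r"] by auto
qed
lemma key_root: "g k t = 0 \<Longrightarrow> sin (2*t) \<noteq> 0 \<Longrightarrow> P k (cis t) = 0"
  using key[of k t] by simp

lemma unit_roots: "\<exists>U::complex set. U \<subseteq> {z. P k z = 0} \<and> finite U \<and> card U = 4*k+2 \<and> (\<forall>z\<in>U. cmod z = 1 \<and> Im z \<noteq> 0)"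
proof -
  define J where "J = {0..2*k+1} - {k}"
  have "\<forall>j\<in>J. \<exists>r. th k j < r \<and> r < hi k j \<and> g k r = 0"
    unfolding J_def using root_exists by auto
  then obtain r where r: "\<And>j. j \<in> J \<Longrightarrow> th k j < r j \<and> r j < hi k j \<and> g k (r j) = 0"
    by metis
  have rp: "0 < r j \<and> r j < pi \<and> sin (2 * r j) \<noteq> 0" if "j \<in> J" for j
    using root_props[of j k "r j"] r[OF that] that unfolding J_def by auto
  have mono: "r i < r j" if "i \<in> J" "j \<in> J" "i < j" for i j
  proof -
    have "i \<noteq> 2*k+1" using that unfolding J_def by auto
    then have "hi k i = th k (i+1)" unfolding hi_def by simp
    also have "\<dots> \<le> th k j" using th_mono[of "i+1" j k] that by (cases "i+1 = j") auto
    finally show ?thesis using r[OF that(1)] r[OF that(2)] by linarith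
  qed
  have req: "i = j" if "i \<in> J" "j \<in> J" "r i = r j" for i j
    using mono[of i j] mono[of j i] that by (cases i j rule: linorder_cases) auto
  define A where "A = (\<lambda>j. cis (r j)) ` J"
  define B where "B = (\<lambda>j. cis (- r j)) ` J"
  have cJ: "card J = 2*k+1" unfolding J_def by (simp add: card_Diff_singleton)
  have fJ: "finite J" unfolding J_def by simp
  have injA: "inj_on (\<lambda>j. cis (r j)) J"
  proof (rule inj_onI)
    fix i j assume ij: "i \<in> J" "j \<in> J" "cis (r i) = cis (r j)"
    then have "cos (r i) = cos (r j)" by (metis cis.sel(1))
    then have "r i = r j" using rp[OF ij(1)] rp[OF ij(2)] cos_inj_pi[of "r i" "r j"] by auto
    then show "i = j" using req ij by auto
  qed
  have injB: "inj_on (\<lambda>j. cis (- r j)) J"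
  proof (rule inj_onI)
    fix i j assume ij: "i \<in> J" "j \<in> J" "cis (- r i) = cis (- r j)"
    then have "cos (- r i) = cos (- r j)" by (metis cis.sel(1))
    then have "r i = r j" using rp[OF ij(1)] rp[OF ij(2)] cos_inj_pi[of "r i" "r j"] by auto
    then show "i = j" using req ij by auto
  qed
  have cA: "card A = 2*k+1" unfolding A_def using card_image[OF injA] cJ by simp
  have cB: "card B = 2*k+1" unfolding B_def using card_image[OF injB] cJ by simp
  have ImA: "Im z > 0" if "z \<in> A" for z using that rp unfolding A_def by (force intro: sin_gt_zero)
  have ImB: "Im z < 0" if "z \<in> B" for z using that rp unfolding B_def by (force intro: sin_gt_zero)
  have disj: "A \<inter> B = {}" using ImA ImB by (meson disjoint_iff not_less_iff_gr_or_eq)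
  have fin: "finite A" "finite B" unfolding A_def B_def using fJ by auto
  have "card (A \<union> B) = 4*k+2" using card_Un_disjoint[OF fin disj] cA cB by simp
  moreover have "A \<union> B \<subseteq> {z. P k z = 0}"
  proof
    fix z assume "z \<in> A \<union> B"
    then obtain j where j: "j \<in> J" "z = cis (r j) \<or> z = cis (- r j)" unfolding A_def B_def by auto
    have "P k (cis (r j)) = 0" using r[OF j(1)] rp[OF j(1)] by (intro key_root) auto
    moreover have "P k (cis (- r j)) = 0" using r[OF j(1)] rp[OF j(1)] by (intro key_root) (auto simp: g_odd)
    ultimately show "z \<in> {z. P k z = 0}" using j by auto
  qed
  moreover have "\<forall>z\<in>A \<union> B. cmod z = 1"
    unfolding A_def B_def by auto
  moreover have "\<forall>z\<in>A \<union> B. Im z \<noteq> 0"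
    using ImA ImB by fastforce
  ultimately show ?thesis using fin by blast
qed
lemma P_of_real: "P k (complex_of_real x) = complex_of_real (P k x)"
  unfolding P_def by simp

lemma P_at0: "P k (0::real) = 1" unfolding P_def by simp
lemma P_at1: "P k (1::real) < 0" unfolding P_def by simp

lemma P_cont: "continuous_on S (P k :: real \<Rightarrow> real)"
  unfolding P_def by (intro continuous_intros)

theorem mainTheorem4:
  fixes k :: nat
  shows "\<exists>\<alpha>::real. 0 < \<alpha> \<and> \<alpha> < 1 \<and> P k \<alpha> = 0
     \<and> (\<forall>a::real. 0 < a \<and> a < 1 \<and> P k a = 0 \<longrightarrow> a = \<alpha>)
     \<and> (\<exists>!a'::real. 1 < a' \<and> P k a' = 0)
     \<and> 1 < 1 / \<alpha> \<and> P k (1 / \<alpha>) = 0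
     \<and> (\<forall>\<beta>::complex. P k \<beta> = 0 \<longrightarrow>
          \<beta> = complex_of_real \<alpha> \<or> \<beta> = complex_of_real (1 / \<alpha>) \<or> cmod \<beta> = 1)"
proof -
  obtain U :: "complex set" where U: "U \<subseteq> {z. P k z = 0}" "finite U" "card U = 4*k+2"
    "\<And>z. z \<in> U \<Longrightarrow> cmod z = 1 \<and> Im z \<noteq> 0"
    using unit_roots[of k] by blast
  have "\<exists>x. 0 \<le> x \<and> x \<le> 1 \<and> P k x = (0::real)"
    using P_at0[of k] P_at1[of k] by (intro IVT2' P_cont) auto
  then obtain al :: real where al: "0 \<le> al" "al \<le> 1" "P k al = 0" by blast
  have al0: "al \<noteq> 0" using al P_at0[of k] by auto
  have al1: "al \<noteq> 1" using al P_at1[of k] by auto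
  have alr: "0 < al" "al < 1" using al al0 al1 by auto
  have inv: "P k (1/al) = 0" using P_palin[of al k] al0 al by simp
  have inv1: "1 < 1/al" using alr by simp
  define Z where "Z = {z::complex. P k z = 0}"
  define A where "A = insert (complex_of_real al) (insert (complex_of_real (1/al)) U)"
  have i2: "P k (complex_of_real (1/al)) = 0" by (simp only: P_of_real inv) simp
  have i1: "P k (complex_of_real al) = 0" by (simp only: P_of_real al(3)) simp
  have AZ: "A \<subseteq> Z" unfolding A_def Z_def using U(1) i1 i2 by blast
  have nU: "complex_of_real x \<notin> U" for x using U(4)[of "complex_of_real x"] by auto
  have ne: "complex_of_real al \<noteq> complex_of_real (1/al)" 
  proof -
    have "al \<noteq> 1/al" using alr inv1 by (metis less_trans not_less_iff_gr_or_eq)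
    then show ?thesis by (metis of_real_eq_iff)
  qed
  have cA: "card A = 4*k+4"
  proof -
    have b: "complex_of_real (1/al) \<notin> U" by (rule nU)
    have a: "complex_of_real al \<notin> insert (complex_of_real (1/al)) U" using nU[of al] ne by blast
    have "card A = Suc (card (insert (complex_of_real (1/al)) U))"
      unfolding A_def by (rule card_insert_disjoint) (use U(2) a in auto)
    also have "\<dots> = Suc (Suc (card U))" using card_insert_disjoint[OF U(2) b] by simp
    finally show ?thesis using U(3) by simp
  qed
  have ZA: "Z = A" using card_roots[of k] AZ cA unfolding Z_def[symmetric]
    by (metis card_seteq)
  have realroot: "a = al \<or> a = 1/al" if "P k a = 0" for a :: real
  proof -
    have "complex_of_real a \<in> A" using that ZA unfolding Z_def by (auto simp: P_of_real)
    then have "complex_of_real a = complex_of_real al \<or> complex_of_real a = complex_of_real (1/al)"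
      using nU[of a] unfolding A_def by blast
    then show ?thesis by (metis of_real_eq_iff)
  qed
  show ?thesis
  proof (intro exI[of _ al] conjI allI impI)
    show "0 < al" "al < 1" "P k al = 0" using alr al by auto
    show "1 < 1/al" "P k (1/al) = 0" using inv inv1 by auto
    fix a :: real assume "0 < a \<and> a < 1 \<and> P k a = 0"
    then show "a = al" using realroot[of a] inv1 by auto
  next
    show "\<exists>!a'::real. 1 < a' \<and> P k a' = 0"
    proof (rule ex1I[of _ "1/al"])
      show "1 < 1/al \<and> P k (1/al) = 0" using inv inv1 by simp
      fix a' :: real assume h: "1 < a' \<and> P k a' = 0"
      then have "a' \<noteq> al" using alr by auto
      then show "a' = 1/al" using realroot[of a'] h by blast
    qed
  next
    fix \<beta> :: complex assume "P k \<beta> = 0"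
    then have "\<beta> \<in> A" using ZA unfolding Z_def by auto
    then show "\<beta> = complex_of_real al \<or> \<beta> = complex_of_real (1 / al) \<or> cmod \<beta> = 1"
      unfolding A_def using U(4) by auto
  qed
qed
end
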